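(* With $n,t,T$, $c(\theta)$ and $s_e(\theta)$ as in the context, we have $|c(\theta)|\le\sqrt{n}$ and $|s_e(\theta)|\le 6\sqrt{n}$ for every $\theta\in\mathbb{R}$.
   Context: Rudin–Shapiro polynomials: $P_0(z)=Q_0(z)=1$ and for $s\ge0$, $P_{s+1}(z)=P_s(z)+z^{2^s}Q_s(z)$, $Q_{s+1}(z)=P_s(z)-z^{2^s}Q_s(z)$. Since the first $2^s$ coefficients of $P_{s+1}$ coincide with those of $P_s$, for each $m\ge1$ let $P_{<m}(z)$ denote the polynomial of degree $m-1$ whose coefficients agree with the first $m$ coefficients of $P_s$ for all sufficiently large $s$. Standing setup: $n$ is a sufficiently large positive integer, $t$ is an odd integer such that $\gamma:=(2^{t+11}+2^t-1)/n$ satisfies $2^{-43}<\gamma\le2^{-40}$, and $T:=2^{t+10}$. With $z=e^{2i\theta}$, define $c(\theta):=\mathrm{Re}\big(z^TP_t(z)+z^{2T}Q_t(z)\big)$ and $s_e(\theta):=\mathrm{Im}\big(P_{<(n+1)}(z)-z^TP_t(z)-z^{2T}P_t(z)\big)$. *)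

theory Defs
  imports "HOL-Computational_Algebra.Polynomial" Complex_Main
begin

primrec RS :: "nat \<Rightarrow> int poly \<times> int poly" where
  "RS 0 = (1, 1)"
| "RS (Suc s) = (fst (RS s) + monom 1 (2^s) * snd (RS s),
                 fst (RS s) - monom 1 (2^s) * snd (RS s))"

definition RSP :: "nat \<Rightarrow> int poly" where "RSP s = fst (RS s)"
definition RSQ :: "nat \<Rightarrow> int poly" where "RSQ s = snd (RS s)"

definition rs_coeff :: "nat \<Rightarrow> int" where
  "rs_coeff k = (THE c. \<forall>\<^sub>F s in sequentially. coeff (RSP s) k = c)"

definition RSP_less :: "nat \<Rightarrow> int poly" where
  "RSP_less m = (\<Sum>k<m. monom (rs_coeff k) k)"

definition ieval :: "int poly \<Rightarrow> complex \<Rightarrow> complex" where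
  "ieval p z = poly (map_poly of_int p) z"

end

theory Submission
  imports Defs
begin

lemma RSP_Suc: "RSP (Suc s) = RSP s + monom 1 (2^s) * RSQ s"
  by (simp add: RSP_def RSQ_def)
lemma RSQ_Suc: "RSQ (Suc s) = RSP s - monom 1 (2^s) * RSQ s"
  by (simp add: RSP_def RSQ_def)
lemma RS0: "RSP 0 = 1" "RSQ 0 = 1"
  by (simp_all add: RSP_def RSQ_def)

lemma coeff_vanish: "\<forall>k\<ge>2^s. coeff (RSP s) k = 0 \<and> coeff (RSQ s) k = 0"
proof (induction s)
  case 0
  then show ?case by (auto simp: RS0 coeff_1)
next
  case (Suc s)
  show ?case
  proof (intro allI impI)
    fix k :: nat assume k: "2^Suc s \<le> k"
    then have k1: "2^s \<le> k" and k2: "2^s \<le> k - 2^s" by auto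
    show "coeff (RSP (Suc s)) k = 0 \<and> coeff (RSQ (Suc s)) k = 0"
      using Suc k1 k2 by (simp add: RSP_Suc RSQ_Suc coeff_monom_mult)
  qed
qed

lemma coeff_P_Suc: "coeff (RSP (Suc s)) k = (if k < 2^s then coeff (RSP s) k else coeff (RSQ s) (k - 2^s))"
  by (simp add: RSP_Suc coeff_monom_mult coeff_vanish)

lemma coeff_Q_Suc: "coeff (RSQ (Suc s)) k = (if k < 2^s then coeff (RSP s) k else - coeff (RSQ s) (k - 2^s))"
  by (simp add: RSQ_Suc coeff_monom_mult coeff_vanish)

lemma coeff_stable: assumes "k < 2^s" "s \<le> s'" shows "coeff (RSP s') k = coeff (RSP s) k"
  using assms(2)
proof (induction s' rule: dec_induct)
  case base then show ?case by simp
next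
  case (step s')
  have "k < 2^s'" using assms(1) step.hyps(1)
    by (meson order_less_le_trans one_le_numeral power_increasing)
  then show ?case using step by (simp add: coeff_P_Suc)
qed

lemma rs_coeff_eq:
  assumes k: "k < 2^s"
  shows "rs_coeff k = coeff (RSP s) k"
proof -
  have E2: "\<forall>\<^sub>F s' in sequentially. coeff (RSP s') k = coeff (RSP s) k"
    unfolding eventually_sequentially using coeff_stable[OF k] by blast
  have U: "c = coeff (RSP s) k" if E: "\<forall>\<^sub>F s' in sequentially. coeff (RSP s') k = c" for c
  proof -
    have "\<forall>\<^sub>F s' in sequentially. c = coeff (RSP s) k"
      using eventually_conj[OF E E2] by (rule eventually_mono) simp
    then show ?thesis
      using eventually_const[OF trivial_limit_sequentially] by blast
  qed
  show ?thesis unfolding rs_coeff_def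
    by (rule the_equality[where P="\<lambda>c. \<forall>\<^sub>F s' in sequentially. coeff (RSP s') k = c", OF E2 U])
qed

definition S :: "int poly \<Rightarrow> nat \<Rightarrow> complex \<Rightarrow> complex" where
  "S p m z = (\<Sum>k<m. of_int (coeff p k) * z^k)"

lemma ieval_sum: "ieval (\<Sum>k<m. monom (c k) k) z = (\<Sum>k<m. of_int (c k) * z^k)"
proof -
  have "map_poly of_int (\<Sum>k<m. monom (c k) k) = (\<Sum>k<m. monom (of_int (c k) :: complex) k)"
    by (intro poly_eqI) (simp add: coeff_map_poly coeff_sum coeff_monom)
  then show ?thesis by (simp add: ieval_def poly_sum poly_monom)
qed

lemma poly_rep: "(\<And>k. k \<ge> N \<Longrightarrow> coeff p k = 0) \<Longrightarrow> p = (\<Sum>k<N. monom (coeff p k) k)"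
  by (intro poly_eqI) (auto simp: coeff_sum coeff_monom)

lemma ieval_S: "(\<And>k. k \<ge> N \<Longrightarrow> coeff p k = 0) \<Longrightarrow> ieval p z = S p N z"
  by (subst poly_rep, assumption) (simp add: ieval_sum S_def)

lemma sum_split: "(\<Sum>k<a+r. f k :: 'a::comm_monoid_add) = (\<Sum>k<a. f k) + (\<Sum>k<(r::nat). f (a+k))"
  by (induction r) (auto simp: add.assoc)

lemma SP_big:
  assumes "2^s \<le> m"
  shows "S (RSP (Suc s)) m z = S (RSP s) (2^s) z + z^(2^s) * S (RSQ s) (m - 2^s) z"
proof -
  have m: "m = 2^s + (m - 2^s)" using assms by simp
  show ?thesis
    apply (subst S_def, subst m, subst sum_split)
    by (simp add: S_def coeff_P_Suc sum_distrib_left power_add mult_ac)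
qed

lemma SQ_big:
  assumes "2^s \<le> m"
  shows "S (RSQ (Suc s)) m z = S (RSP s) (2^s) z - z^(2^s) * S (RSQ s) (m - 2^s) z"
proof -
  have m: "m = 2^s + (m - 2^s)" using assms by simp
  show ?thesis
    apply (subst S_def, subst m, subst sum_split)
    by (simp add: S_def coeff_Q_Suc sum_distrib_left power_add mult_ac sum_negf)
qed

lemma S_small:
  assumes "m \<le> 2^s"
  shows "S (RSP (Suc s)) m z = S (RSP s) m z" "S (RSQ (Suc s)) m z = S (RSP s) m z"
  using assms unfolding S_def
  by (auto intro!: sum.cong simp: coeff_P_Suc coeff_Q_Suc)

lemma full_norm:
  assumes z: "norm z = 1"
  shows "(norm (S (RSP s) (2^s) z))^2 + (norm (S (RSQ s) (2^s) z))^2 = 2^(s+1)"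
proof (induction s)
  case 0
  then show ?case by (simp add: S_def RS0)
next
  case (Suc s)
  define a where "a = S (RSP s) (2^s) z"
  define b where "b = z^(2^s) * S (RSQ s) (2^s) z"
  have nb: "norm b = norm (S (RSQ s) (2^s) z)" using z by (simp add: b_def norm_mult norm_power)
  have e1: "S (RSP (Suc s)) (2^Suc s) z = a + b" by (simp add: SP_big a_def b_def)
  have e2: "S (RSQ (Suc s)) (2^Suc s) z = a - b" by (simp add: SQ_big a_def b_def)
  have par: "(norm (a+b))^2 + (norm (a-b))^2 = 2 * (norm a)^2 + 2 * (norm b)^2"
    by (simp only: cmod_power2) (simp add: power2_eq_square algebra_simps)
  show ?case
    apply (subst e1, subst e2)
    using Suc par nb by (simp add: a_def)
qed

lemma full_bound:
  assumes z: "norm z = 1"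
  shows "norm (S (RSP s) (2^s) z) \<le> sqrt (2^(s+1))" "norm (S (RSQ s) (2^s) z) \<le> sqrt (2^(s+1))"
proof -
  have h: "(norm (S (RSP s) (2^s) z))^2 \<le> 2^(s+1)" "(norm (S (RSQ s) (2^s) z))^2 \<le> 2^(s+1)"
    using full_norm[OF z, of s] zero_le_power2[of "norm (S (RSP s) (2^s) z)"]
       zero_le_power2[of "norm (S (RSQ s) (2^s) z)"] by linarith+
  show "norm (S (RSP s) (2^s) z) \<le> sqrt (2^(s+1))" by (rule real_le_rsqrt[OF h(1)])
  show "norm (S (RSQ s) (2^s) z) \<le> sqrt (2^(s+1))" by (rule real_le_rsqrt[OF h(2)])
qed

lemma real_ineq:
  fixes a r :: real
  assumes "0 \<le> r" "r \<le> a"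
  shows "sqrt (2*a) + 4 * sqrt r \<le> 4 * sqrt (a + r)"
proof -
  define u where "u = sqrt a"
  define v where "v = sqrt r"
  have u: "u \<ge> 0" "u^2 = a" using assms by (auto simp: u_def)
  have v: "v \<ge> 0" "v^2 = r" "v \<le> u" using assms by (auto simp: u_def v_def)
  have "sqrt (2*a) \<le> 3/2 * u"
    using u by (intro real_le_lsqrt) (auto simp: power2_eq_square)
  moreover have "3/2*u + 4*v \<le> sqrt (16 * (a + r))"
  proof (rule real_le_rsqrt)
    have "u*v \<le> u*u" using v(3) u(1) by (rule mult_left_mono)
    then have "u*v \<le> u^2" by (simp only: power2_eq_square)
    moreover have "(3/2*u + 4*v)^2 = 9/4*u^2 + 12*(u*v) + 16*v^2"
      by (simp add: power2_eq_square algebra_simps)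
    ultimately show "(3/2*u + 4*v)^2 \<le> 16 * (a + r)"
      using u(2) v(2) assms unfolding distrib_left by linarith
  qed
  moreover have "sqrt (16 * (a + r)) = 4 * sqrt (a + r)"
  proof -
    have "sqrt 16 = (4::real)" by (rule real_sqrt_unique) auto
    then show ?thesis by (simp only: real_sqrt_mult)
  qed
  moreover have "sqrt r = v" by (simp add: v_def)
  ultimately show ?thesis by linarith
qed

lemma trunc_bound:
  assumes z: "norm z = 1"
  shows "\<forall>m \<le> 2^s. norm (S (RSP s) m z) \<le> 4 * sqrt m \<and> norm (S (RSQ s) m z) \<le> 4 * sqrt m"
proof (induction s)
  case 0
  show ?case
  proof (intro allI impI)
    fix m :: nat assume "m \<le> 2^0"
    then have "m = 0 \<or> m = 1" by auto
    then show "norm (S (RSP 0) m z) \<le> 4 * sqrt m \<and> norm (S (RSQ 0) m z) \<le> 4 * sqrt m"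
      by (auto simp: S_def RS0)
  qed
next
  case (Suc s)
  show ?case
  proof (intro allI impI)
    fix m :: nat assume m: "m \<le> 2^Suc s"
    show "norm (S (RSP (Suc s)) m z) \<le> 4 * sqrt m \<and> norm (S (RSQ (Suc s)) m z) \<le> 4 * sqrt m"
    proof (cases "m \<le> 2^s")
      case True
      then show ?thesis using Suc.IH True by (simp only: S_small)
    next
      case False
      define r where "r = m - 2^s"
      have r: "r \<le> 2^s" "m = 2^s + r" using m False by (auto simp: r_def)
      have IH: "norm (S (RSQ s) r z) \<le> 4 * sqrt r" using conjunct2[OF Suc.IH[rule_format, OF r(1)]] .
      have F: "norm (S (RSP s) (2^s) z) \<le> sqrt (2 * 2^s)"
        using full_bound(1)[OF z, of s] by (simp only: power_Suc Suc_eq_plus1[symmetric])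
      have nw: "norm (z^(2^s) * S (RSQ s) r z) = norm (S (RSQ s) r z)"
        using z by (simp add: norm_mult norm_power)
      have rr: "real r \<le> 2^s" proof -
        have "real r \<le> real (2^s)" using r(1) by (simp only: of_nat_le_iff)
        then show ?thesis by simp
      qed
      have mr: "real m = 2^s + real r" using r(2) by simp
      have key: "sqrt (2 * 2^s) + 4 * sqrt r \<le> 4 * sqrt m"
        unfolding mr by (rule real_ineq) (use rr in auto)
      have ge: "2^s \<le> m" using False by simp
      have "norm (S (RSP (Suc s)) m z) \<le> norm (S (RSP s) (2^s) z) + norm (z^(2^s) * S (RSQ s) r z)"
        unfolding SP_big[OF ge] r_def by (rule norm_triangle_ineq)
      moreover have "norm (S (RSQ (Suc s)) m z) \<le> norm (S (RSP s) (2^s) z) + norm (z^(2^s) * S (RSQ s) r z)"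
        unfolding SQ_big[OF ge] r_def by (rule norm_triangle_ineq4)
      ultimately show ?thesis using F IH nw key by linarith
    qed
  qed
qed

theorem lemma3p3:
  shows "\<exists>N::nat. \<forall>n\<ge>N. \<forall>t::nat. \<forall>\<theta>::real.
     (odd t \<and> 0 < n \<and>
      1 / 2^43 < (2^(t+11) + 2^t - 1) / real n \<and>
      (2^(t+11) + 2^t - 1) / real n \<le> 1 / 2^40) \<longrightarrow>
     (let T = 2^(t+10); z = cis (2 * \<theta>) in
        \<bar>Re (z^T * ieval (RSP t) z + z^(2*T) * ieval (RSQ t) z)\<bar> \<le> sqrt (real n) \<and>
        \<bar>Im (ieval (RSP_less (n+1)) z - z^T * ieval (RSP t) z - z^(2*T) * ieval (RSP t) z)\<bar>
          \<le> 6 * sqrt (real n))"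
proof (intro exI[of _ 2] allI impI)
  fix n t :: nat and \<theta> :: real
  assume n: "2 \<le> n"
  assume H: "odd t \<and> 0 < n \<and>
      1 / 2^43 < (2^(t+11) + 2^t - 1) / real n \<and>
      (2^(t+11) + 2^t - 1) / real n \<le> 1 / 2^40"
  define z where "z = cis (2 * \<theta>)"
  define T :: nat where "T = 2^(t+10)"
  have z: "norm z = 1" by (simp add: z_def)
  have nT: "norm (z^T) = 1" "norm (z^(2*T)) = 1" using z by (simp_all add: norm_power)
  have hb: "(2^(t+11) + 2^t - 1) / real n \<le> 1 / 2^40" using H by simp
  have "(2^(t+11) + 2^t - 1 :: real) \<le> real n / 2^40"
    using hb n by (simp add: divide_simps)
  moreover have "(8 * 2^t :: real) \<le> 2^(t+11) + 2^t - 1"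
  proof -
    have "(1::real) \<le> 2^t" by simp
    moreover have "(2::real)^(t+11) = 2048 * 2^t" by (simp add: power_add)
    ultimately show ?thesis by linarith
  qed
  moreover have "real n / 2^40 \<le> real n" by simp
  ultimately have tn: "4 * 2^(t+1) \<le> real n" by simp
  have sq: "2 * sqrt (2^(t+1)) \<le> sqrt (real n)"
  proof -
    have s4: "sqrt 4 = (2::real)" by (rule real_sqrt_unique) auto
    have "2 * sqrt (2^(t+1)) = sqrt (4 * 2^(t+1))" by (simp only: real_sqrt_mult s4)
    also have "\<dots> \<le> sqrt (real n)" using tn by (simp del: power_Suc)
    finally show ?thesis .
  qed
  have P: "ieval (RSP t) z = S (RSP t) (2^t) z" and Q: "ieval (RSQ t) z = S (RSQ t) (2^t) z"
    by (auto intro!: ieval_S simp: coeff_vanish)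
  have bP: "norm (ieval (RSP t) z) \<le> sqrt (2^(t+1))" and bQ: "norm (ieval (RSQ t) z) \<le> sqrt (2^(t+1))"
    using full_bound[OF z, of t] P Q by auto
  have n1: "n + 1 \<le> 2^(n+1)"
    using less_exp[of "n+1"] by simp
  have L: "ieval (RSP_less (n+1)) z = S (RSP (n+1)) (n+1) z"
  proof -
    have "ieval (RSP_less (n+1)) z = (\<Sum>k<n+1. of_int (rs_coeff k) * z^k)"
      by (simp add: RSP_less_def ieval_sum del: sum.lessThan_Suc)
    also have "\<dots> = S (RSP (n+1)) (n+1) z"
      unfolding S_def
    proof (intro sum.cong refl)
      fix k assume "k \<in> {..<n+1}"
      then have "k < 2^(n+1)" using n1 by simp
      then show "of_int (rs_coeff k) * z^k = of_int (coeff (RSP (n+1)) k) * z^k"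
        by (simp only: rs_coeff_eq)
    qed
    finally show ?thesis .
  qed
  have bL: "norm (ieval (RSP_less (n+1)) z) \<le> 4 * sqrt (real (n+1))"
    using trunc_bound[OF z, of "n+1"] n1 L by auto
  have s5: "4 * sqrt (real (n+1)) \<le> 5 * sqrt (real n)"
  proof -
    have s16: "sqrt 16 = (4::real)" and s25: "sqrt 25 = (5::real)" by (rule real_sqrt_unique; simp)+
    have "4 * sqrt (real (n+1)) = sqrt (16 * real (n+1))" by (simp only: real_sqrt_mult s16)
    also have "\<dots> \<le> sqrt (25 * real n)" using n by simp
    also have "\<dots> = 5 * sqrt (real n)" by (simp only: real_sqrt_mult s25)
    finally show ?thesis .
  qed
  have c1: "\<bar>Re (z^T * ieval (RSP t) z + z^(2*T) * ieval (RSQ t) z)\<bar> \<le> sqrt (real n)"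
  proof -
    have "\<bar>Re (z^T * ieval (RSP t) z + z^(2*T) * ieval (RSQ t) z)\<bar>
        \<le> norm (z^T * ieval (RSP t) z + z^(2*T) * ieval (RSQ t) z)" by (rule abs_Re_le_cmod)
    also have "\<dots> \<le> norm (z^T * ieval (RSP t) z) + norm (z^(2*T) * ieval (RSQ t) z)"
      by (rule norm_triangle_ineq)
    also have "\<dots> = norm (ieval (RSP t) z) + norm (ieval (RSQ t) z)"
      using nT by (simp add: norm_mult)
    finally show ?thesis using bP bQ sq by linarith
  qed
  have c2: "\<bar>Im (ieval (RSP_less (n+1)) z - z^T * ieval (RSP t) z - z^(2*T) * ieval (RSP t) z)\<bar>
          \<le> 6 * sqrt (real n)"
  proof -
    have "\<bar>Im (ieval (RSP_less (n+1)) z - z^T * ieval (RSP t) z - z^(2*T) * ieval (RSP t) z)\<bar>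
        \<le> norm (ieval (RSP_less (n+1)) z - z^T * ieval (RSP t) z - z^(2*T) * ieval (RSP t) z)"
      by (rule abs_Im_le_cmod)
    also have "\<dots> \<le> norm (ieval (RSP_less (n+1)) z - z^T * ieval (RSP t) z) + norm (z^(2*T) * ieval (RSP t) z)"
      by (rule norm_triangle_ineq4)
    also have "\<dots> \<le> norm (ieval (RSP_less (n+1)) z) + norm (z^T * ieval (RSP t) z) + norm (z^(2*T) * ieval (RSP t) z)"
      using norm_triangle_ineq4 by simp
    also have "\<dots> = norm (ieval (RSP_less (n+1)) z) + norm (ieval (RSP t) z) + norm (ieval (RSP t) z)"
      using nT by (simp add: norm_mult)
    finally show ?thesis using bP bL s5 sq by linarith
  qed
  show "let T = 2^(t+10); z = cis (2 * \<theta>) in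
        \<bar>Re (z^T * ieval (RSP t) z + z^(2*T) * ieval (RSQ t) z)\<bar> \<le> sqrt (real n) \<and>
        \<bar>Im (ieval (RSP_less (n+1)) z - z^T * ieval (RSP t) z - z^(2*T) * ieval (RSP t) z)\<bar>
          \<le> 6 * sqrt (real n)"
    using c1 c2 by (simp add: Let_def z_def T_def)
qed

end
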